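(* For every integer $k\geq 1$ there exists a finite tree $\tau$ such that $\mathrm{box}(\tau^k)>k$.
   Context: For a tree $\tau$, $\tau^k$ is the graph on $V(\tau)$ in which distinct $u,v$ are adjacent iff their distance in $\tau$ is at most $k$. The boxicity $\mathrm{box}(G)$ is the minimum integer $t$ such that $G$ is the intersection graph of axis-parallel $t$-dimensional boxes (Cartesian products of $t$ closed real intervals), i.e. there is a map $f$ from $V(G)$ to such boxes with $(u,v)\in E(G)\iff f(u)\cap f(v)\neq\emptyset$ for distinct $u,v$. *)

theory Defs
  imports Main "HOL-Library.FuncSet" Complex_Main
begin

definition simple_graph :: "'a set \<Rightarrow> ('a \<Rightarrow> 'a \<Rightarrow> bool) \<Rightarrow> bool" where
  "simple_graph V E \<longleftrightarrow>
     (\<forall>u v. E u v \<longrightarrow> u \<in> V \<and> v \<in> V) \<and>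
     (\<forall>u v. E u v \<longrightarrow> E v u) \<and> (\<forall>u. \<not> E u u)"

definition is_walk :: "'a set \<Rightarrow> ('a \<Rightarrow> 'a \<Rightarrow> bool) \<Rightarrow> 'a list \<Rightarrow> bool" where
  "is_walk V E xs \<longleftrightarrow> xs \<noteq> [] \<and> set xs \<subseteq> V \<and>
     (\<forall>i. Suc i < length xs \<longrightarrow> E (xs ! i) (xs ! Suc i))"

definition connected_graph :: "'a set \<Rightarrow> ('a \<Rightarrow> 'a \<Rightarrow> bool) \<Rightarrow> bool" where
  "connected_graph V E \<longleftrightarrow>
     (\<forall>u\<in>V. \<forall>v\<in>V. \<exists>xs. is_walk V E xs \<and> hd xs = u \<and> last xs = v)"

definition is_cycle :: "'a set \<Rightarrow> ('a \<Rightarrow> 'a \<Rightarrow> bool) \<Rightarrow> 'a list \<Rightarrow> bool" where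
  "is_cycle V E xs \<longleftrightarrow> is_walk V E xs \<and> distinct xs \<and> length xs \<ge> 3 \<and>
     E (last xs) (hd xs)"

definition finite_tree :: "'a set \<Rightarrow> ('a \<Rightarrow> 'a \<Rightarrow> bool) \<Rightarrow> bool" where
  "finite_tree V E \<longleftrightarrow> simple_graph V E \<and> finite V \<and> V \<noteq> {} \<and>
     connected_graph V E \<and> (\<nexists>xs. is_cycle V E xs)"

definition graph_dist :: "'a set \<Rightarrow> ('a \<Rightarrow> 'a \<Rightarrow> bool) \<Rightarrow> 'a \<Rightarrow> 'a \<Rightarrow> nat" where
  "graph_dist V E u v = (LEAST n. \<exists>xs. is_walk V E xs \<and> hd xs = u \<and> last xs = v
                                        \<and> length xs = Suc n)"

definition graph_power :: "'a set \<Rightarrow> ('a \<Rightarrow> 'a \<Rightarrow> bool) \<Rightarrow> nat \<Rightarrow> 'a \<Rightarrow> 'a \<Rightarrow> bool" where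
  "graph_power V E k u v \<longleftrightarrow> u \<in> V \<and> v \<in> V \<and> u \<noteq> v \<and> graph_dist V E u v \<le> k"

definition box_set :: "nat \<Rightarrow> (nat \<Rightarrow> real) \<Rightarrow> (nat \<Rightarrow> real) \<Rightarrow> (nat \<Rightarrow> real) set" where
  "box_set t a b = (\<Pi>\<^sub>E i\<in>{..<t}. {a i .. b i})"

definition box_representable :: "'a set \<Rightarrow> ('a \<Rightarrow> 'a \<Rightarrow> bool) \<Rightarrow> nat \<Rightarrow> bool" where
  "box_representable V E t \<longleftrightarrow>
     (\<exists>a b :: 'a \<Rightarrow> nat \<Rightarrow> real.
        (\<forall>v\<in>V. \<forall>i<t. a v i \<le> b v i) \<and>
        (\<forall>u\<in>V. \<forall>v\<in>V. u \<noteq> v \<longrightarrow>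
            (E u v \<longleftrightarrow> box_set t (a u) (b u) \<inter> box_set t (a v) (b v) \<noteq> {})))"

definition boxicity :: "'a set \<Rightarrow> ('a \<Rightarrow> 'a \<Rightarrow> bool) \<Rightarrow> nat" where
  "boxicity V E = (LEAST t. box_representable V E t)"

end

theory Submission
  imports Defs "HOL-Library.Nat_Bijection" "HOL-Library.Infinite_Set"
begin


lemma walk_single: "x \<in> V \<Longrightarrow> is_walk V E [x]"
  by (simp add: is_walk_def)

lemma walk_Cons: "is_walk V E (x # y # zs) \<longleftrightarrow> x \<in> V \<and> E x y \<and> is_walk V E (y # zs)"
proof
  assume h: "is_walk V E (x # y # zs)"
  have "\<forall>i. Suc i < length (y#zs) \<longrightarrow> E ((y#zs) ! i) ((y#zs) ! Suc i)"
  proof (intro allI impI)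
    fix i assume "Suc i < length (y#zs)"
    then have "Suc (Suc i) < length (x#y#zs)" by simp
    with h have "E ((x#y#zs) ! Suc i) ((x#y#zs) ! Suc (Suc i))" unfolding is_walk_def by blast
    then show "E ((y#zs) ! i) ((y#zs) ! Suc i)" by simp
  qed
  moreover have "E x y" using h unfolding is_walk_def by (metis length_Cons nth_Cons_0 nth_Cons_Suc zero_less_Suc Suc_less_eq)
  ultimately show "x \<in> V \<and> E x y \<and> is_walk V E (y # zs)" using h unfolding is_walk_def by auto
next
  assume h: "x \<in> V \<and> E x y \<and> is_walk V E (y # zs)"
  have "\<forall>i. Suc i < length (x#y#zs) \<longrightarrow> E ((x#y#zs) ! i) ((x#y#zs) ! Suc i)"
  proof (intro allI impI)
    fix i assume i: "Suc i < length (x#y#zs)"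
    show "E ((x#y#zs) ! i) ((x#y#zs) ! Suc i)"
    proof (cases i)
      case 0 then show ?thesis using h by simp
    next
      case (Suc j)
      then have "Suc j < length (y#zs)" using i by simp
      then have "E ((y#zs) ! j) ((y#zs) ! Suc j)" using h unfolding is_walk_def by blast
      then show ?thesis using Suc by simp
    qed
  qed
  then show "is_walk V E (x # y # zs)" using h unfolding is_walk_def by auto
qed

lemma walk_append: "is_walk V E xs \<Longrightarrow> is_walk V E ys \<Longrightarrow> last xs = hd ys \<Longrightarrow> is_walk V E (xs @ tl ys)"
proof (induction xs)
  case Nil then show ?case by (simp add: is_walk_def)
next
  case (Cons x xs)
  show ?case
  proof (cases xs)
    case Nil
    then have "ys = x # tl ys" using Cons.prems by (cases ys) (auto simp: is_walk_def)
    then show ?thesis using Cons.prems Nil by simp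
  next
    case (Cons y zs)
    note Cons2 = Cons
    have w: "is_walk V E xs" using Cons.prems(1) Cons2 walk_Cons by metis
    have "last xs = hd ys" using Cons.prems(3) Cons2 by simp
    then have ih: "is_walk V E (xs @ tl ys)" using Cons.IH w Cons.prems(2) by blast
    show ?thesis using Cons.prems(1) ih Cons2 by (simp add: walk_Cons)
  qed
qed

lemma walk_rev:
  assumes sym: "\<And>u v. E u v \<Longrightarrow> E v u" and w: "is_walk V E xs"
  shows "is_walk V E (rev xs)"
proof -
  have "\<forall>i. Suc i < length (rev xs) \<longrightarrow> E (rev xs ! i) (rev xs ! Suc i)"
  proof (intro allI impI)
    fix i assume i: "Suc i < length (rev xs)"
    let ?n = "length xs"
    have a: "rev xs ! i = xs ! (?n - Suc i)" using i by (simp add: rev_nth)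
    have b: "rev xs ! Suc i = xs ! (?n - Suc (Suc i))" using i by (simp add: rev_nth)
    have c: "Suc (?n - Suc (Suc i)) = ?n - Suc i" using i by simp
    have "Suc (?n - Suc (Suc i)) < ?n" using i by simp
    then have "E (xs ! (?n - Suc (Suc i))) (xs ! Suc (?n - Suc (Suc i)))" using w unfolding is_walk_def by blast
    then show "E (rev xs ! i) (rev xs ! Suc i)" using a b c sym by metis
  qed
  then show ?thesis using w unfolding is_walk_def by auto
qed

lemma walk_lip:
  assumes lip: "\<And>u v. E u v \<Longrightarrow> \<bar>\<phi> u - \<phi> v\<bar> \<le> (1::int)"
  shows "is_walk V E xs \<Longrightarrow> \<bar>\<phi> (hd xs) - \<phi> (last xs)\<bar> \<le> int (length xs) - 1"
proof (induction xs)
  case Nil then show ?case by (simp add: is_walk_def)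
next
  case (Cons x xs)
  show ?case
  proof (cases xs)
    case Nil then show ?thesis by simp
  next
    case (Cons y zs)
    note Cons2 = Cons
    have "E x y" "is_walk V E xs" using Cons.prems Cons2 walk_Cons by metis+
    then have "\<bar>\<phi> y - \<phi> (last xs)\<bar> \<le> int (length xs) - 1" "\<bar>\<phi> x - \<phi> y\<bar> \<le> 1"
      using Cons.IH lip Cons2 by auto
    then show ?thesis using Cons2 by simp
  qed
qed

lemma dist_le: "is_walk V E xs \<Longrightarrow> hd xs = u \<Longrightarrow> last xs = v \<Longrightarrow> length xs = Suc n \<Longrightarrow> graph_dist V E u v \<le> n"
  unfolding graph_dist_def by (rule Least_le) blast

lemma dist_walk: "graph_dist V E u v \<le> k \<Longrightarrow> is_walk V E xs \<Longrightarrow> hd xs = u \<Longrightarrow> last xs = v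
   \<Longrightarrow> \<exists>ys. is_walk V E ys \<and> hd ys = u \<and> last ys = v \<and> length ys \<le> Suc k"
proof -
  assume d: "graph_dist V E u v \<le> k" and w: "is_walk V E xs" "hd xs = u" "last xs = v"
  have ex: "\<exists>n. \<exists>xs. is_walk V E xs \<and> hd xs = u \<and> last xs = v \<and> length xs = Suc n"
    using w by (metis is_walk_def length_greater_0_conv Suc_pred)
  from LeastI_ex[OF ex] obtain ys where "is_walk V E ys \<and> hd ys = u \<and> last ys = v \<and> length ys = Suc (graph_dist V E u v)"
    unfolding graph_dist_def by blast
  then show ?thesis using d by auto
qed



definition vx :: "nat \<Rightarrow> nat \<Rightarrow> nat" where "vx i d = (if d = 0 then 0 else prod_encode (i, d))"
definition lg :: "nat \<Rightarrow> nat" where "lg w = fst (prod_decode w)"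
definition dp :: "nat \<Rightarrow> nat" where "dp w = snd (prod_decode w)"
definition TV :: "nat \<Rightarrow> nat \<Rightarrow> nat set" where
  "TV m K = {w. w = 0 \<or> (lg w < m \<and> 1 \<le> dp w \<and> dp w \<le> K)}"
definition TE :: "nat \<Rightarrow> nat \<Rightarrow> nat \<Rightarrow> nat \<Rightarrow> bool" where
  "TE m K u w \<longleftrightarrow> u \<in> TV m K \<and> w \<in> TV m K \<and>
    ((u = 0 \<and> w \<noteq> 0 \<and> dp w = 1) \<or> (w = 0 \<and> u \<noteq> 0 \<and> dp u = 1) \<or>
     (u \<noteq> 0 \<and> w \<noteq> 0 \<and> lg u = lg w \<and> (dp u = Suc (dp w) \<or> dp w = Suc (dp u))))"

lemma pd0: "prod_decode 0 = (0,0)"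
proof -
  have "prod_encode (0,0) = 0" by (simp add: prod_encode_def)
  then show ?thesis by (metis prod_encode_inverse)
qed

lemma dp0[simp]: "dp 0 = 0" and lg0[simp]: "lg 0 = 0"
  by (simp_all add: dp_def lg_def pd0)

lemma vx0[simp]: "vx i 0 = 0" by (simp add: vx_def)

lemma vx_lg[simp]: "d \<noteq> 0 \<Longrightarrow> lg (vx i d) = i" and vx_dp[simp]: "dp (vx i d) = d"
  by (auto simp: vx_def lg_def dp_def pd0)

lemma vx_nz[simp]: "vx i d = 0 \<longleftrightarrow> d = 0"
proof -
  have "prod_encode (i, d) = 0 \<Longrightarrow> d = 0" by (metis dp_def pd0 prod_encode_inverse snd_conv)
  then show ?thesis by (auto simp: vx_def)
qed

lemma TV_nz: "w \<in> TV m K \<Longrightarrow> w \<noteq> 0 \<Longrightarrow> 1 \<le> dp w \<and> dp w \<le> K \<and> lg w < m"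
  by (auto simp: TV_def)

lemma vx_self: "w \<in> TV m K \<Longrightarrow> vx (lg w) (dp w) = w"
  by (cases "w = 0") (auto simp: TV_def vx_def lg_def dp_def)

lemma vx_in: "i < m \<Longrightarrow> d \<le> K \<Longrightarrow> vx i d \<in> TV m K"
  by (cases "d = 0") (auto simp: TV_def)

lemma TE_sym: "TE m K u w \<Longrightarrow> TE m K w u"
  unfolding TE_def by auto

lemma TE_step: "i < m \<Longrightarrow> d < K \<Longrightarrow> TE m K (vx i d) (vx i (Suc d))"
  unfolding TE_def by (cases "d = 0") (auto simp: vx_in TV_def)

lemma TE_V: "TE m K u w \<Longrightarrow> u \<in> TV m K \<and> w \<in> TV m K"
  unfolding TE_def by auto

fun upw :: "nat \<Rightarrow> nat \<Rightarrow> nat \<Rightarrow> nat list" where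
  "upw i d 0 = [vx i d]"
| "upw i d (Suc n) = vx i d # upw i (Suc d) n"

lemma upw_ne: "upw i d n \<noteq> []" by (cases n) auto

lemma upw_props: "hd (upw i d n) = vx i d \<and> last (upw i d n) = vx i (d + n) \<and> length (upw i d n) = Suc n"
  by (induction n arbitrary: d) (auto simp: upw_ne)

lemma upw_walk: "i < m \<Longrightarrow> d + n \<le> K \<Longrightarrow> is_walk (TV m K) (TE m K) (upw i d n)"
proof (induction n arbitrary: d)
  case 0 then show ?case by (simp add: walk_single vx_in)
next
  case (Suc n)
  have "is_walk (TV m K) (TE m K) (upw i (Suc d) n)" using Suc by simp
  moreover have "upw i (Suc d) n = vx i (Suc d) # tl (upw i (Suc d) n)"
    using upw_props[of i "Suc d" n] upw_ne by (metis list.collapse)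
  ultimately show ?case using Suc.prems TE_step[of i m d K] vx_in[of i m d K]
    by (metis upw.simps(2) walk_Cons add_Suc_right Suc_le_eq le_add1 le_trans less_le_trans
          lessI order.strict_trans1 le_less_trans add_lessD1 Suc_le_lessD)
qed

lemma last_app_tl: "xs \<noteq> [] \<Longrightarrow> ys \<noteq> [] \<Longrightarrow> last xs = hd ys \<Longrightarrow> last (xs @ tl ys) = last ys"
  by (cases ys) auto

lemma walk_cross:
  assumes "i < m" "j < m" "d \<le> K" "d' \<le> K"
  shows "\<exists>xs. is_walk (TV m K) (TE m K) xs \<and> hd xs = vx i d \<and> last xs = vx j d' \<and> length xs = Suc (d + d')"
proof -
  let ?xs = "rev (upw i 0 d) @ tl (upw j 0 d')"
  have w1: "is_walk (TV m K) (TE m K) (rev (upw i 0 d))"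
    using walk_rev[where E="TE m K", OF TE_sym] upw_walk assms by simp
  have w2: "is_walk (TV m K) (TE m K) (upw j 0 d')" using upw_walk assms by simp
  have l: "last (rev (upw i 0 d)) = hd (upw j 0 d')" using upw_props upw_ne by (simp add: last_rev)
  have "is_walk (TV m K) (TE m K) ?xs" using walk_append[OF w1 w2 l] .
  moreover have "hd ?xs = vx i d" using upw_props upw_ne by (simp add: hd_rev)
  moreover have "last ?xs = vx j d'" using last_app_tl[OF _ upw_ne l] upw_props upw_ne by simp
  moreover have "length ?xs = Suc (d + d')" using upw_props by simp
  ultimately show ?thesis by blast
qed

lemma walk_same:
  assumes "i < m" "d \<le> K" "d' \<le> K"
  shows "\<exists>xs. is_walk (TV m K) (TE m K) xs \<and> hd xs = vx i d \<and> last xs = vx i d' \<and> length xs = Suc ((d - d') + (d' - d))"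
proof (cases "d \<le> d'")
  case True
  then show ?thesis using upw_walk[of i m d "d' - d" K] upw_props[of i d "d'-d"] assms by auto
next
  case False
  have "is_walk (TV m K) (TE m K) (rev (upw i d' (d - d')))"
    using walk_rev[where E="TE m K", OF TE_sym] upw_walk[of i m d' "d - d'" K] assms False by simp
  then show ?thesis using upw_props[of i d' "d-d'"] upw_ne False
    by (intro exI[of _ "rev (upw i d' (d - d'))"]) (simp add: hd_rev last_rev)
qed

definition phi :: "nat \<Rightarrow> nat \<Rightarrow> int" where
  "phi i w = (if lg w = i then int (dp w) else - int (dp w))"

lemma phi_lip: "TE m K u w \<Longrightarrow> \<bar>phi i u - phi i w\<bar> \<le> 1"
  unfolding TE_def phi_def by auto

lemma down_unique:
  assumes "TE m K w u" "dp u \<le> dp w"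
  shows "u = (if dp w = 1 then 0 else vx (lg w) (dp w - 1))"
proof -
  have uV: "u \<in> TV m K" using assms TE_V by blast
  have "(w = 0 \<and> u \<noteq> 0 \<and> dp u = 1) \<or> (u = 0 \<and> w \<noteq> 0 \<and> dp w = 1) \<or>
     (w \<noteq> 0 \<and> u \<noteq> 0 \<and> lg w = lg u \<and> (dp w = Suc (dp u) \<or> dp u = Suc (dp w)))"
    using assms(1) unfolding TE_def by blast
  then show ?thesis
  proof (elim conjE disjE)
    assume "w = 0" "u \<noteq> 0" "dp u = 1" then show ?thesis using assms(2) by simp
  next
    assume "u = 0" "w \<noteq> 0" "dp w = 1" then show ?thesis by simp
  next
    assume h: "w \<noteq> 0" "u \<noteq> 0" "lg w = lg u" "dp w = Suc (dp u)"
    have "1 \<le> dp u" using TV_nz[OF uV h(2)] by simp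
    then show ?thesis using h vx_self[OF uV] by simp
  next
    assume h: "w \<noteq> 0" "u \<noteq> 0" "lg w = lg u" "dp u = Suc (dp w)"
    then show ?thesis using assms(2) by simp
  qed
qed

lemma no_cycle: "\<not> is_cycle (TV m K) (TE m K) xs"
proof
  assume c: "is_cycle (TV m K) (TE m K) xs"
  let ?n = "length xs"
  have n3: "?n \<ge> 3" and dist: "distinct xs" and w: "is_walk (TV m K) (TE m K) xs"
    and lh: "TE m K (last xs) (hd xs)" using c unfolding is_cycle_def by auto
  have ne: "xs \<noteq> []" using n3 by auto
  define M where "M = Max (dp ` set xs)"
  have "M \<in> dp ` set xs" unfolding M_def using ne by simp
  then obtain p where p: "p < ?n" "dp (xs ! p) = M" by (metis imageE in_set_conv_nth)
  have Mge: "\<And>q. q < ?n \<Longrightarrow> dp (xs ! q) \<le> M" unfolding M_def by simp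
  define nx where "nx = (if Suc p < ?n then Suc p else 0)"
  define pv where "pv = (if p = 0 then ?n - 1 else p - 1)"
  have nxl: "nx < ?n" "pv < ?n" using p n3 unfolding nx_def pv_def by auto
  have neq: "nx \<noteq> pv" using p n3 unfolding nx_def pv_def by auto
  have lastn: "last xs = xs ! (?n - 1)" using ne by (simp add: last_conv_nth)
  have hd0: "hd xs = xs ! 0" using ne by (simp add: hd_conv_nth)
  have e1: "TE m K (xs ! p) (xs ! nx)"
  proof (cases "Suc p < ?n")
    case True then show ?thesis using w unfolding is_walk_def nx_def by auto
  next
    case False then have "p = ?n - 1" using p by auto
    then show ?thesis using lh lastn hd0 False unfolding nx_def by simp
  qed
  have e2: "TE m K (xs ! p) (xs ! pv)"
  proof (cases "p = 0")
    case True then show ?thesis using lh lastn hd0 TE_sym unfolding pv_def by metis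
  next
    case False
    then have "Suc (p - 1) < ?n" "Suc (p-1) = p" using p by auto
    then have "TE m K (xs ! (p-1)) (xs ! p)" using w unfolding is_walk_def by metis
    then show ?thesis using False TE_sym unfolding pv_def by metis
  qed
  have "xs ! nx = xs ! pv"
    using down_unique[OF e1] down_unique[OF e2] Mge nxl p by simp
  then show False using dist neq nxl by (simp add: nth_eq_iff_index_eq)
qed

lemma is_tree: assumes "0 < m" shows "finite_tree (TV m K) (TE m K)"
proof -
  have sg: "simple_graph (TV m K) (TE m K)"
    unfolding simple_graph_def using TE_V TE_sym by (auto simp: TE_def)
  have fin: "finite (TV m K)"
  proof -
    have "TV m K \<subseteq> insert 0 (prod_encode ` ({..<m} \<times> {..K}))"
    proof
      fix w assume "w \<in> TV m K"
      then show "w \<in> insert 0 (prod_encode ` ({..<m} \<times> {..K}))"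
        unfolding TV_def lg_def dp_def
        by (cases "w = 0") (auto intro!: image_eqI[where x="prod_decode w"] simp: mem_Times_iff)
    qed
    then show ?thesis by (rule finite_subset) simp
  qed
  have ne: "TV m K \<noteq> {}" by (auto simp: TV_def)
  have con: "connected_graph (TV m K) (TE m K)"
    unfolding connected_graph_def
  proof (intro ballI)
    fix u v assume u: "u \<in> TV m K" and v: "v \<in> TV m K"
    have lu: "lg u < m \<and> dp u \<le> K" using u assms by (cases "u = 0") (auto simp: TV_def)
    have lv: "lg v < m \<and> dp v \<le> K" using v assms by (cases "v = 0") (auto simp: TV_def)
    show "\<exists>xs. is_walk (TV m K) (TE m K) xs \<and> hd xs = u \<and> last xs = v"
      using walk_cross[of "lg u" m "lg v" "dp u" K "dp v"] lu lv vx_self[OF u] vx_self[OF v] by metis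
  qed
  show ?thesis unfolding finite_tree_def using sg fin ne con no_cycle by blast
qed



lemma box_inter:
  assumes "\<forall>q<t. a1 q \<le> b1 q" "\<forall>q<t. a2 q \<le> b2 q"
  shows "box_set t a1 b1 \<inter> box_set t a2 b2 \<noteq> {} \<longleftrightarrow> (\<forall>q<t. a1 q \<le> b2 q \<and> a2 q \<le> b1 q)"
proof
  assume "box_set t a1 b1 \<inter> box_set t a2 b2 \<noteq> {}"
  then obtain f where "f \<in> box_set t a1 b1" "f \<in> box_set t a2 b2" by blast
  then have "\<forall>q<t. f q \<in> {a1 q..b1 q} \<and> f q \<in> {a2 q..b2 q}" unfolding box_set_def by (auto simp: PiE_iff)
  then show "\<forall>q<t. a1 q \<le> b2 q \<and> a2 q \<le> b1 q" by fastforce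
next
  assume h: "\<forall>q<t. a1 q \<le> b2 q \<and> a2 q \<le> b1 q"
  define f where "f = restrict (\<lambda>q. max (a1 q) (a2 q)) {..<t}"
  have "f \<in> box_set t a1 b1" "f \<in> box_set t a2 b2" unfolding box_set_def f_def using h assms by (auto simp: PiE_iff)
  then show "box_set t a1 b1 \<inter> box_set t a2 b2 \<noteq> {}" by blast
qed

lemma dist_sym:
  assumes sym: "\<And>u v. E u v \<Longrightarrow> E v u"
  shows "graph_dist V E u v = graph_dist V E v u"
proof -
  have rv: "\<And>u v n. (\<exists>xs. is_walk V E xs \<and> hd xs = u \<and> last xs = v \<and> length xs = Suc n) \<Longrightarrow>
      (\<exists>xs. is_walk V E xs \<and> hd xs = v \<and> last xs = u \<and> length xs = Suc n)"
  proof -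
    fix u v n assume "\<exists>xs. is_walk V E xs \<and> hd xs = u \<and> last xs = v \<and> length xs = Suc n"
    then obtain xs where h: "is_walk V E xs" "hd xs = u" "last xs = v" "length xs = Suc n" by blast
    have "xs \<noteq> []" using h by auto
    then show "\<exists>xs. is_walk V E xs \<and> hd xs = v \<and> last xs = u \<and> length xs = Suc n"
      using walk_rev[OF sym h(1)] h by (intro exI[of _ "rev xs"]) (simp add: hd_rev last_rev)
  qed
  then have "(\<lambda>n. \<exists>xs. is_walk V E xs \<and> hd xs = u \<and> last xs = v \<and> length xs = Suc n) =
     (\<lambda>n. \<exists>xs. is_walk V E xs \<and> hd xs = v \<and> last xs = u \<and> length xs = Suc n)"
    apply (intro ext iffI) apply (erule rv) apply (erule rv) done
  then show ?thesis unfolding graph_dist_def by (simp only:)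
qed

lemma rep_exists:
  fixes V :: "nat set"
  assumes fin: "finite V" and sym: "\<And>u v. G u v \<Longrightarrow> G v u"
  shows "\<exists>t. box_representable V G t"
proof -
  obtain N where N: "V \<subseteq> {..<N}" using fin finite_nat_iff_bounded by blast
  define a :: "nat \<Rightarrow> nat \<Rightarrow> real" where "a w q = (if q = w then 1 else 0)" for w q
  define b :: "nat \<Rightarrow> nat \<Rightarrow> real" where "b w q = (if q = w \<or> G w q then 1 else 0)" for w q
  have ab: "\<forall>v\<in>V. \<forall>q<N. a v q \<le> b v q" unfolding a_def b_def by auto
  have "\<forall>u\<in>V. \<forall>v\<in>V. u \<noteq> v \<longrightarrow> (G u v \<longleftrightarrow> box_set N (a u) (b u) \<inter> box_set N (a v) (b v) \<noteq> {})"
  proof (intro ballI impI)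
    fix u v assume u: "u \<in> V" and v: "v \<in> V" and uv: "u \<noteq> v"
    have eq: "box_set N (a u) (b u) \<inter> box_set N (a v) (b v) \<noteq> {} \<longleftrightarrow> (\<forall>q<N. a u q \<le> b v q \<and> a v q \<le> b u q)"
      using box_inter ab u v by blast
    have "u < N" "v < N" using u v N by auto
    then have "(\<forall>q<N. a u q \<le> b v q \<and> a v q \<le> b u q) \<longleftrightarrow> G v u \<and> G u v"
    proof -
      assume uN: "u < N" "v < N"
      have au: "a u u = 1" "a v u = 0" "a u v = 0" "a v v = 1" unfolding a_def using uv by auto
      have bu: "b v u = (if G v u then 1 else 0)" "b u v = (if G u v then 1 else 0)" unfolding b_def using uv by auto
      show ?thesis
      proof
        assume h: "\<forall>q<N. a u q \<le> b v q \<and> a v q \<le> b u q"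
        have "a u u \<le> b v u" "a v v \<le> b u v" using h uN by auto
        then show "G v u \<and> G u v" using au bu by (auto split: if_splits)
      next
        assume h: "G v u \<and> G u v"
        show "\<forall>q<N. a u q \<le> b v q \<and> a v q \<le> b u q"
        proof (intro allI impI)
          fix q assume "q < N"
          show "a u q \<le> b v q \<and> a v q \<le> b u q"
            unfolding a_def b_def using h by auto
        qed
      qed
    qed
    then show "G u v \<longleftrightarrow> box_set N (a u) (b u) \<inter> box_set N (a v) (b v) \<noteq> {}"
      using eq sym by blast
  qed
  then show ?thesis unfolding box_representable_def using ab by blast
qed



lemma no_rep:
  fixes k m t :: nat
  assumes km: "(k+2)^(2*k) < m" and tk: "t \<le> k"
  shows "\<not> box_representable (TV m (Suc k)) (graph_power (TV m (Suc k)) (TE m (Suc k)) k) t"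
proof
  let ?V = "TV m (Suc k)" let ?E = "TE m (Suc k)"
  define G where "G = graph_power ?V ?E k"
  assume "box_representable ?V (graph_power ?V ?E k) t"
  then obtain a b :: "nat \<Rightarrow> nat \<Rightarrow> real" where ab: "\<forall>v\<in>?V. \<forall>q<t. a v q \<le> b v q"
    and iff: "\<forall>u\<in>?V. \<forall>v\<in>?V. u \<noteq> v \<longrightarrow> (G u v \<longleftrightarrow> box_set t (a u) (b u) \<inter> box_set t (a v) (b v) \<noteq> {})"
    unfolding box_representable_def G_def by blast
  have Nb_le: "a u q \<le> b v q \<and> a v q \<le> b u q"
    if u: "u \<in> ?V" and v: "v \<in> ?V" and h: "u = v \<or> G u v" and q: "q < t" for u v q
  proof (cases "u = v")
    case True then show ?thesis using ab u q by auto
  next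
    case False
    then have "box_set t (a u) (b u) \<inter> box_set t (a v) (b v) \<noteq> {}" using iff h u v by blast
    then have "\<forall>q<t. a u q \<le> b v q \<and> a v q \<le> b u q"
      using box_inter[of t "a u" "b u" "a v" "b v"] ab u v by blast
    then show ?thesis using q by blast
  qed
  have sep: "\<exists>q<t. b u q < a v q \<or> b v q < a u q"
    if u: "u \<in> ?V" and v: "v \<in> ?V" and uv: "u \<noteq> v" and ng: "\<not> G u v" for u v
  proof -
    have "box_set t (a u) (b u) \<inter> box_set t (a v) (b v) = {}" using iff u v uv ng by blast
    then have "\<not> (\<forall>q<t. a u q \<le> b v q \<and> a v q \<le> b u q)"
      using box_inter[of t "a u" "b u" "a v" "b v"] ab u v by blast
    then show ?thesis by (meson not_le)
  qed
  define X where "X i e = vx i (Suc k - e)" for i e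
  define C where "C j e = vx j e" for j e
  have XV: "X i e \<in> ?V" if "i < m" for i e unfolding X_def using vx_in that by simp
  have CV: "C j e \<in> ?V" if "j < m" "e \<le> k" for j e unfolding C_def using vx_in that by simp
  have Nb: "u = v \<or> G u v" if "u \<in> ?V" "v \<in> ?V" "graph_dist ?V ?E u v \<le> k" for u v
    unfolding G_def graph_power_def using that by auto
  have adjA: "C i e' = X i e \<or> G (C i e') (X i e)" if hA: "i < m" "1 \<le> e'" "e' \<le> k" "e \<le> k" for i e' e
  proof -
    obtain xs where "is_walk ?V ?E xs" "hd xs = C i e'" "last xs = X i e"
      "length xs = Suc ((e' - (Suc k - e)) + ((Suc k - e) - e'))"
      using walk_same[of i m e' "Suc k" "Suc k - e", OF hA(1) le_SucI[OF hA(3)] diff_le_self]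
      unfolding C_def X_def by blast
    then have "graph_dist ?V ?E (C i e') (X i e) \<le> (e' - (Suc k - e)) + ((Suc k - e) - e')"
      by (rule dist_le)
    also have "\<dots> \<le> k" using that by auto
    finally show ?thesis using Nb CV XV that by auto
  qed
  have adjB: "C j e = X i' e' \<or> G (C j e) (X i' e')" if hB: "j < m" "i' < m" "e < e'" "e' \<le> k" for j i' e e'
  proof -
    obtain xs where "is_walk ?V ?E xs" "hd xs = C j e" "last xs = X i' e'"
      "length xs = Suc (e + (Suc k - e'))"
      using walk_cross[of j m i' e "Suc k" "Suc k - e'", OF hB(1,2) _ diff_le_self] hB
      unfolding C_def X_def by (meson le_SucI less_imp_le_nat order.strict_trans2)
    then have "graph_dist ?V ?E (C j e) (X i' e') \<le> e + (Suc k - e')"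
      by (rule dist_le)
    also have "\<dots> \<le> k" using that by auto
    finally show ?thesis using Nb CV XV that by auto
  qed
  have nonadj: "X i e \<noteq> C j e \<and> \<not> G (X i e) (C j e)" if hN: "i < m" "j < m" "i \<noteq> j" "e \<le> k" for i j e
  proof -
    have p1: "phi i (X i e) = int (Suc k - e)" unfolding X_def phi_def using that by simp
    have p2: "phi i (C j e) = - int e" unfolding C_def phi_def using that by (cases "e = 0") auto
    have ne: "X i e \<noteq> C j e" using p1 p2 that by auto
    moreover have "\<not> G (X i e) (C j e)"
    proof
      assume g: "G (X i e) (C j e)"
      then have d: "graph_dist ?V ?E (X i e) (C j e) \<le> k" unfolding G_def graph_power_def by auto
      obtain xs where "is_walk ?V ?E xs" "hd xs = X i e" "last xs = C j e"
        using walk_cross[of i m j "Suc k - e" "Suc k" e, OF hN(1,2) diff_le_self] hN(4)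
      unfolding C_def X_def by (meson le_SucI)
      from dist_walk[OF d this] obtain ys where ys: "is_walk ?V ?E ys" "hd ys = X i e" "last ys = C j e"
        "length ys \<le> Suc k" by blast
      have "\<bar>phi i (hd ys) - phi i (last ys)\<bar> \<le> int (length ys) - 1"
        using walk_lip[of ?E "phi i", OF phi_lip ys(1)] .
      then show False using ys p1 p2 that by auto
    qed
    ultimately show ?thesis by blast
  qed
  define R where "R q s x c \<longleftrightarrow> (if s then b x q < a c q else b c q < a x q)" for q s x c
  have task: "\<exists>q<t. \<exists>s. R q s (X i e) (C j e)" if hT: "i < m" "j < m" "i \<noteq> j" "e \<le> k" for i j e
  proof -
    obtain q where "q < t" "b (X i e) q < a (C j e) q \<or> b (C j e) q < a (X i e) q"
      using sep[OF XV[OF hT(1)] CV[OF hT(2) hT(4)]] nonadj[OF hT] by blast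
    then show ?thesis unfolding R_def by (metis (full_types))
  qed
  have thr: "e' \<le> e" if "i < m" "j < m" "i' < m" "1 \<le> e'" "e' \<le> k" "e \<le> k" "q < t"
    "R q s (X i e) (C j e)" "R q s (X i' e') (C i e')" for i j i' e e' q s
  proof (rule ccontr)
    assume "\<not> e' \<le> e"
    then have ee: "e < e'" by simp
    have 1: "a (C i e') q \<le> b (X i e) q \<and> a (X i e) q \<le> b (C i e') q"
      using Nb_le[OF CV XV adjA] that by simp
    have 2: "a (C j e) q \<le> b (X i' e') q \<and> a (X i' e') q \<le> b (C j e) q"
      using Nb_le[OF CV XV adjB[OF _ _ ee]] that ee by simp
    show False using 1 2 that(8,9) unfolding R_def by (cases s) auto
  qed
  have same: False if "i < m" "j < m" "1 \<le> e" "e \<le> k" "q < t"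
    "R q s (X i e) (C j e)" "R q s (X j e) (C i e)" for i j e q s
  proof -
    have 1: "a (C i e) q \<le> b (X i e) q \<and> a (X i e) q \<le> b (C i e) q"
      using Nb_le[OF CV XV adjA] that by simp
    have 2: "a (C j e) q \<le> b (X j e) q \<and> a (X j e) q \<le> b (C j e) q"
      using Nb_le[OF CV XV adjA] that by simp
    show False using 1 2 that(6,7) unfolding R_def by (cases s) auto
  qed
  define th where "th i q s = (LEAST e. e = Suc k \<or> (e \<le> k \<and> (\<exists>j<m. j \<noteq> i \<and> R q s (X i e) (C j e))))" for i q s
  have P1: "th i q s \<le> Suc k" for i q s unfolding th_def by (rule Least_le) simp
  have P2: "th i q s \<le> e" if "j < m" "j \<noteq> i" "e \<le> k" "R q s (X i e) (C j e)" for i j e q s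
    unfolding th_def by (rule Least_le) (use that in blast)
  have P3: "e' \<le> th i q s" if "i < m" "i' < m" "1 \<le> e'" "e' \<le> k" "q < t" "R q s (X i' e') (C i e')" for i i' e' q s
  proof -
    have "th i q s = Suc k \<or> (th i q s \<le> k \<and> (\<exists>j<m. j \<noteq> i \<and> R q s (X i (th i q s)) (C j (th i q s))))"
      unfolding th_def by (rule LeastI[of _ "Suc k"]) simp
    then show ?thesis
    proof
      assume "th i q s = Suc k" then show ?thesis using that by simp
    next
      assume "th i q s \<le> k \<and> (\<exists>j<m. j \<noteq> i \<and> R q s (X i (th i q s)) (C j (th i q s)))"
      then obtain j where "j < m" "th i q s \<le> k" "R q s (X i (th i q s)) (C j (th i q s))" by blast
      then show ?thesis using thr[of i j i' e' "th i q s" q s] that by blast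
    qed
  qed
  define S where "S = {..<t} \<times> (UNIV :: bool set)"
  define sig where "sig i = restrict (\<lambda>p. th i (fst p) (snd p)) S" for i
  have finS: "finite S" unfolding S_def by simp
  have cS: "card S = 2 * t" unfolding S_def by (simp add: card_cartesian_product)
  have sub: "sig ` {..<m} \<subseteq> PiE S (\<lambda>_. {..Suc k})" using P1 by (auto simp: sig_def)
  have "card (PiE S (\<lambda>_. {..Suc k})) = (Suc (Suc k)) ^ (2 * t)"
    using finS cS by (simp add: card_PiE)
  also have "\<dots> \<le> (k+2) ^ (2 * k)"
  proof -
    have "Suc (Suc k) ^ (2 * t) \<le> Suc (Suc k) ^ (2 * k)" using tk by (intro power_increasing) auto
    then show ?thesis by simp
  qed
  also have "\<dots> < card {..<m}" using km by simp
  finally have "card (sig ` {..<m}) < card {..<m}"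
    using card_mono[OF _ sub] finite_PiE[of S "\<lambda>_. {..Suc k}"] finS by (meson finite_atMost le_less_trans)
  then have "\<not> inj_on sig {..<m}" using pigeonhole by blast
  then obtain i j where ij: "i < m" "j < m" "i \<noteq> j" "sig i = sig j" unfolding inj_on_def by auto
  have theq: "th i q s = th j q s" if "q < t" for q s
  proof -
    have "sig i (q, s) = sig j (q, s)" using ij by simp
    then show ?thesis using that unfolding sig_def S_def by simp
  qed
  define f where "f p = th i (fst p) (snd p)" for p
  have lev1: "\<exists>pp. fst pp \<in> S \<and> snd pp \<in> S \<and> fst pp \<noteq> snd pp \<and> f (fst pp) = e \<and> f (snd pp) = e"
    if e: "1 \<le> e" "e \<le> k" for e
  proof -
    obtain q s where qs: "q < t" "R q s (X i e) (C j e)" using task[of i j e] ij e by auto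
    have "th i q s \<le> e" using P2[of j i e q s] qs ij e by auto
    moreover have "e \<le> th j q s" using P3[of j i e q s] qs ij e by auto
    ultimately have 1: "th i q s = e" using theq qs by fastforce
    obtain q' s' where qs': "q' < t" "R q' s' (X j e) (C i e)" using task[of j i e] ij e by auto
    have "th j q' s' \<le> e" using P2[of i j e q' s'] qs' ij e by auto
    moreover have "e \<le> th i q' s'" using P3[of i j e q' s'] qs' ij e by auto
    ultimately have 2: "th i q' s' = e" using theq qs' by fastforce
    have "(q, s) \<noteq> (q', s')"
    proof
      assume "(q, s) = (q', s')"
      then have "q = q'" "s = s'" by auto
      then show False using same[of i j e q s] qs qs' ij e by simp
    qed
    then show ?thesis using 1 2 qs qs' unfolding f_def S_def
      by (intro exI[of _ "((q,s),(q',s'))"]) auto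
  qed
  obtain p0 where p0: "p0 \<in> S" "f p0 = 0"
  proof -
    obtain q s where qs: "q < t" "R q s (X i 0) (C j 0)" using task[of i j 0] ij by auto
    have "th i q s \<le> 0" using P2[of j i 0 q s] qs ij by auto
    then show ?thesis using that[of "(q,s)"] qs unfolding f_def S_def by auto
  qed
  obtain PP where PP: "\<forall>e\<in>{1..k}. fst (PP e) \<in> S \<and> snd (PP e) \<in> S \<and> fst (PP e) \<noteq> snd (PP e) \<and>
      f (fst (PP e)) = e \<and> f (snd (PP e)) = e"
    using bchoice[of "{1..k}"] lev1 by (metis atLeastAtMost_iff)
  define g where "g n = (if n = 0 then p0 else if odd n then fst (PP ((n+1) div 2)) else snd (PP (n div 2)))" for n
  have fg: "g n \<in> S \<and> f (g n) = (n + 1) div 2" if "n \<le> 2 * k" for n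
  proof (cases "n = 0")
    case True then show ?thesis using p0 unfolding g_def by simp
  next
    case False
    show ?thesis
    proof (cases "odd n")
      case True
      then have "(n+1) div 2 \<in> {1..k}" using that False by (auto elim!: oddE)
      then show ?thesis using PP False True unfolding g_def by auto
    next
      case ev: False
      then have "n div 2 \<in> {1..k}" "(n+1) div 2 = n div 2" using that False by (auto elim!: evenE)
      then show ?thesis using PP False ev unfolding g_def by auto
    qed
  qed
  have inj: "inj_on g {..2*k}"
  proof (rule inj_onI)
    fix n n' assume n: "n \<in> {..2*k}" and n': "n' \<in> {..2*k}" and eq: "g n = g n'"
    have de: "(n+1) div 2 = (n'+1) div 2" using fg n n' eq by (metis atMost_iff)
    show "n = n'"
    proof (rule ccontr)
      assume nn: "n \<noteq> n'"
      have "(odd n \<and> even n' \<and> n' \<noteq> 0 \<and> n' = n + 1) \<or> (odd n' \<and> even n \<and> n \<noteq> 0 \<and> n = n' + 1)"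
        using de nn by presburger
      then show False
      proof
        assume h: "odd n \<and> even n' \<and> n' \<noteq> 0 \<and> n' = n + 1"
        then have e: "(n+1) div 2 = n' div 2" "(n+1) div 2 \<in> {1..k}" using n' by (auto elim!: oddE)
        have "g n = fst (PP ((n+1) div 2))" "g n' = snd (PP ((n+1) div 2))"
          using h e unfolding g_def by auto
        moreover have "fst (PP ((n+1) div 2)) \<noteq> snd (PP ((n+1) div 2))" using PP e(2) by blast
        ultimately show False using eq by simp
      next
        assume h: "odd n' \<and> even n \<and> n \<noteq> 0 \<and> n = n' + 1"
        then have e: "(n'+1) div 2 = n div 2" "(n'+1) div 2 \<in> {1..k}" using n by (auto elim!: oddE)
        have "g n' = fst (PP ((n'+1) div 2))" "g n = snd (PP ((n'+1) div 2))"
          using h e unfolding g_def by auto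
        moreover have "fst (PP ((n'+1) div 2)) \<noteq> snd (PP ((n'+1) div 2))" using PP e(2) by blast
        ultimately show False using eq by simp
      qed
    qed
  qed
  have "g ` {..2*k} \<subseteq> S" using fg by auto
  then have "card {..2*k} \<le> card S" using card_inj_on_le[OF inj _ finS] by blast
  then show False using cS tk by simp
qed


theorem theorem2:
  fixes k :: nat
  assumes "k \<ge> 1"
  shows "\<exists>(V :: nat set) E. finite_tree V E \<and> boxicity V (graph_power V E k) > k"
proof -
  define m where "m = (k+2)^(2*k) + 1"
  let ?V = "TV m (Suc k)" let ?E = "TE m (Suc k)"
  have tree: "finite_tree ?V ?E" using is_tree[of m "Suc k"] unfolding m_def by simp
  have fin: "finite ?V" using tree unfolding finite_tree_def by blast
  have sym: "graph_power ?V ?E k v u" if "graph_power ?V ?E k u v" for u v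
    using that dist_sym[of ?E ?V u v, OF TE_sym] unfolding graph_power_def by auto
  obtain t0 where t0: "box_representable ?V (graph_power ?V ?E k) t0"
    using rep_exists[OF fin, of "graph_power ?V ?E k"] sym by blast
  have "k < boxicity ?V (graph_power ?V ?E k)"
  proof (rule ccontr)
    assume "\<not> k < boxicity ?V (graph_power ?V ?E k)"
    then have le: "boxicity ?V (graph_power ?V ?E k) \<le> k" by simp
    have "box_representable ?V (graph_power ?V ?E k) (boxicity ?V (graph_power ?V ?E k))"
      unfolding boxicity_def by (rule LeastI[of _ t0]) (rule t0)
    moreover have "(k+2)^(2*k) < m" unfolding m_def by simp
    ultimately show False using no_rep le by blast
  qed
  then show ?thesis using tree by blast
qed

end
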